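(* Let $(M,d)$ be a metric space and let $X,Y,Z\subseteq M$. Let $\mathcal{N}$ be a $\sigma$-algebra of subsets of $Y$ containing all Borel subsets of $Y$, and let $\nu$ be a measure on $\mathcal{N}$ with $\nu(Y)<+\infty$. Let $\upsilon_Y\in]0,+\infty[$ and assume that $Y$ is upper $\upsilon_Y$-Ahlfors regular with respect to $X\cup Z$. Let $s_1,s_2\in[0,\upsilon_Y[$. If $s_1+s_2=\upsilon_Y$, assume furthermore that $Y$ is strongly upper $\upsilon_Y$-Ahlfors regular with respect to $X\cup Z$. Then there exists a constant $c\in]0,+\infty[$ such that \[ \int_Y\frac{d\nu(y)}{d(x,y)^{s_1}d(y,z)^{s_2}}\leq \begin{cases} c\,\bigl(1+d(x,z)^{\upsilon_Y-(s_1+s_2)}\bigr) & \text{if } (x,z)\in X\times Z,\ s_1+s_2<\upsilon_Y,\\[2pt] c\,\bigl(1+|\log d(x,z)|\bigr) & \text{if } (x,z)\in X\times Z,\ x\neq z,\ s_1+s_2=\upsilon_Y,\\[2pt] c\, d(x,z)^{\upsilon_Y-(s_1+s_2)} & \text{if } (x,z)\in X\times Z,\ x\neq z,\ s_1+s_2>\upsilon_Y. \end{cases} \]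
   Context: For $\xi\in M$, $r>0$, $B(\xi,r)=\{\eta\in M: d(\xi,\eta)<r\}$, and $B(\xi,0)=\emptyset$. For $W\subseteq M$ and $\upsilon\in]0,+\infty[$: $Y$ is upper $\upsilon$-Ahlfors regular with respect to $W$ if there exist $r_0\in]0,+\infty]$ and $c_0\in]0,+\infty[$ such that $\nu(B(x,r)\cap Y)\leq c_0 r^{\upsilon}$ for all $x\in W$ and all $r\in]0,r_0[$. $Y$ is strongly upper $\upsilon$-Ahlfors regular with respect to $W$ if there exist $r_0\in]0,+\infty]$ and $c_0\in]0,+\infty[$ such that $\nu((B(x,r_2)\setminus B(x,r_1))\cap Y)\leq c_0(r_2^{\upsilon}-r_1^{\upsilon})$ for all $x\in W$ and all $r_1,r_2\in[0,r_0[$ with $r_1<r_2$. Integrands of the form $d(x,y)^{-s}$ with $s>0$ are understood as $+\infty$ where $d(x,y)=0$. *)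

theory Defs
  imports "HOL-Analysis.Analysis"
begin

definition upper_ahlfors_regular ::
  "'a::metric_space measure \<Rightarrow> 'a set \<Rightarrow> real \<Rightarrow> 'a set \<Rightarrow> bool" where
  "upper_ahlfors_regular nu Y v W \<longleftrightarrow>
     (\<exists>r0::ereal. r0 > 0 \<and> (\<exists>c0::real. c0 > 0 \<and>
        (\<forall>x\<in>W. \<forall>r::real. 0 < r \<and> ereal r < r0 \<longrightarrow>
            emeasure nu (ball x r \<inter> Y) \<le> ennreal (c0 * r powr v))))"

definition strongly_upper_ahlfors_regular ::
  "'a::metric_space measure \<Rightarrow> 'a set \<Rightarrow> real \<Rightarrow> 'a set \<Rightarrow> bool" where
  "strongly_upper_ahlfors_regular nu Y v W \<longleftrightarrow>
     (\<exists>r0::ereal. r0 > 0 \<and> (\<exists>c0::real. c0 > 0 \<and>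
        (\<forall>x\<in>W. \<forall>r1 r2::real. 0 \<le> r1 \<and> r1 < r2 \<and> ereal r2 < r0 \<longrightarrow>
            emeasure nu ((ball x r2 - ball x r1) \<inter> Y)
              \<le> ennreal (c0 * (r2 powr v - r1 powr v)))))"

definition inv_pow :: "real \<Rightarrow> real \<Rightarrow> ennreal" where
  "inv_pow s t = (if s = 0 then 1 else if t = 0 then \<infinity> else ennreal (t powr (- s)))"

end

theory Submission imports Defs begin

lemma inv_pow_pos: "0 < t \<Longrightarrow> inv_pow s t = ennreal (t powr (- s))"
  by (simp add: inv_pow_def)

lemma inv_pow_anti:
  assumes "0 \<le> s" "0 < a" "a \<le> b" shows "inv_pow s b \<le> inv_pow s a"
  using assms by (auto simp: inv_pow_pos intro!: ennreal_leI powr_mono2')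

lemma inv_pow_le:
  assumes "0 \<le> s" "0 < a" "a \<le> t" shows "inv_pow s t \<le> ennreal (a powr (- s))"
  using inv_pow_anti[OF assms] assms by (simp add: inv_pow_pos)

lemma inv_pow_mult:
  assumes "0 \<le> s1" "0 \<le> s2" "0 \<le> t"
  shows "inv_pow s1 t * inv_pow s2 t = inv_pow (s1 + s2) t"
proof (cases "s1 = 0 \<or> s2 = 0")
  case True thus ?thesis by (auto simp: inv_pow_def)
next
  case False
  hence pos: "s1 + s2 \<noteq> 0" using assms by auto
  show ?thesis
  proof (cases "t = 0")
    case True thus ?thesis using False pos by (simp add: inv_pow_def)
  next
    case t: False
    have "ennreal (t powr (- s1)) * ennreal (t powr (- s2)) = ennreal (t powr (- s1) * t powr (- s2))"
      by (simp add: ennreal_mult)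
    also have "t powr (- s1) * t powr (- s2) = t powr (- (s1 + s2))"
      by (simp add: powr_add[symmetric])
    finally show ?thesis using False pos t by (simp add: inv_pow_def)
  qed
qed

lemma inv_pow_meas[measurable]: "inv_pow s \<in> borel_measurable borel"
  unfolding inv_pow_def by measurable

lemma transfer_meas:
  assumes "space nu = Y" "sets (restrict_space borel Y) \<subseteq> sets nu"
    and "g \<in> borel_measurable borel"
  shows "g \<in> borel_measurable nu"
proof -
  have "g \<in> borel_measurable (restrict_space borel Y)"
    using assms(3) by (rule measurable_restrict_space1)
  then show ?thesis using assms(1,2)
    unfolding measurable_def by (auto simp: space_restrict_space)
qed

lemma exists_dyadic:
  assumes "0 < (a::real)" "a \<le> t"
  shows "\<exists>k::nat. a * 2^k \<le> t \<and> t \<le> a * 2^(Suc k)"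
proof -
  obtain n where n: "t / a < 2 ^ n" using real_arch_pow[of 2 "t/a"] by auto
  hence ex: "\<exists>n. t < a * 2^n" using assms by (auto simp: field_simps)
  define m where "m = (LEAST n. t < a * 2^n)"
  have m: "t < a * 2^m" unfolding m_def by (rule LeastI_ex[OF ex])
  have "m \<noteq> 0"
  proof
    assume "m = 0" with m assms show False by simp
  qed
  then obtain k where k: "m = Suc k" by (cases m) auto
  have "\<not> t < a * 2^k" using k m_def not_less_Least[of k "\<lambda>n. t < a * 2^n"] by auto
  thus ?thesis using m k by (intro exI[of _ k]) (auto simp: not_less)
qed

lemma dist_meas[measurable]: "dist x \<in> borel_measurable borel"
  by (intro borel_measurable_continuous_onI continuous_intros)

lemma ball_borel[measurable]: "ball x r \<in> sets borel"
  by (simp add: borel_open)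

lemma powr_geom:
  assumes "0 < b" "0 < (m::real)"
  shows "(b * m^k) powr (- s) * (C * (4 * (b * m^k)) powr v)
         = C * 4 powr v * b powr (v - s) * (m powr (v - s))^k"
proof -
  have bm: "0 < b * m^k" using assms by simp
  have "(b * m^k) powr (- s) * (4 * (b * m^k)) powr v = 4 powr v * (b * m^k) powr (v - s)"
    using bm by (simp add: powr_mult powr_add[symmetric] algebra_simps)
  moreover have "(b * m^k) powr (v - s) = b powr (v - s) * (m powr (v - s))^k"
  proof -
    have "(m powr (v - s))^k = m powr (real k * (v - s))" using assms by (simp add: powr_power)
    also have "\<dots> = (m powr real k) powr (v - s)" by (simp only: powr_powr)
    also have "\<dots> = (m^k) powr (v - s)" using assms by (simp only: powr_realpow)
    finally show ?thesis using assms by (simp add: powr_mult)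
  qed
  ultimately show ?thesis by (simp add: algebra_simps)
qed

definition ahl_at :: "'a::metric_space measure \<Rightarrow> 'a set \<Rightarrow> real \<Rightarrow> real \<Rightarrow> 'a \<Rightarrow> bool" where
  "ahl_at nu Y C v x \<longleftrightarrow> (\<forall>r>0. emeasure nu (ball x r \<inter> Y) \<le> ennreal (C * r powr v))"

locale sett =
  fixes nu :: "'a::metric_space measure" and Y :: "'a set" and C vY V :: real
  assumes space_nu: "space nu = Y" and borel_sets: "sets (restrict_space borel Y) \<subseteq> sets nu"
    and V: "emeasure nu Y = ennreal V" and V0: "0 \<le> V" and Cpos: "0 < C" and vpos: "0 < vY"
begin

lemma meas: "g \<in> borel_measurable borel \<Longrightarrow> g \<in> borel_measurable nu"
  using transfer_meas[OF space_nu borel_sets] .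

lemma sets_Y: "A \<in> sets borel \<Longrightarrow> A \<inter> Y \<in> sets nu"
  using borel_sets by (auto simp: sets_restrict_space)

lemma int_ind: "A \<in> sets borel \<Longrightarrow> (\<integral>\<^sup>+ y. indicator A y \<partial>nu) = emeasure nu (A \<inter> Y)"
proof -
  assume A: "A \<in> sets borel"
  have "(\<integral>\<^sup>+ y. indicator A y \<partial>nu) = (\<integral>\<^sup>+ y. indicator (A \<inter> Y) y \<partial>nu)"
    by (rule nn_integral_cong) (auto simp: space_nu indicator_def)
  also have "\<dots> = emeasure nu (A \<inter> Y)" using sets_Y[OF A] by simp
  finally show ?thesis .
qed

lemma int_one: "(\<integral>\<^sup>+ y. 1 \<partial>nu) = ennreal V"
  using V by (simp add: space_nu)

lemma int_le_V: "(\<And>y. g y \<le> 1) \<Longrightarrow> (\<integral>\<^sup>+ y. g y \<partial>nu) \<le> ennreal V"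
  using nn_integral_mono[of nu g "\<lambda>_. 1"] int_one by auto

lemma ball_int: "ahl_at nu Y C vY x \<Longrightarrow> 0 < r \<Longrightarrow>
    (\<integral>\<^sup>+ y. indicator (ball x r) y \<partial>nu) \<le> ennreal (C * r powr vY)"
  by (simp add: int_ind ahl_at_def)

lemma null_pt:
  assumes "ahl_at nu Y C vY x" shows "AE y in nu. y \<noteq> x"
proof (rule AE_I')
  have cl: "{x} \<in> sets borel" by simp
  have "emeasure nu ({x} \<inter> Y) \<le> 0"
  proof (rule ennreal_le_epsilon)
    fix e :: real assume e: "0 < e"
    define r where "r = (e / C) powr (1 / vY)"
    have r: "0 < r" using e Cpos by (simp add: r_def)
    have "r powr vY = e / C" using e Cpos vpos by (simp add: r_def powr_powr)
    hence "C * r powr vY = e" using Cpos by simp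
    moreover have "emeasure nu ({x} \<inter> Y) \<le> emeasure nu (ball x r \<inter> Y)"
      by (rule emeasure_mono) (use r sets_Y[of "ball x r"] in auto)
    ultimately show "emeasure nu ({x} \<inter> Y) \<le> 0 + ennreal e"
      using assms r unfolding ahl_at_def by (metis add_0 order_trans)
  qed
  thus "{x} \<inter> Y \<in> null_sets nu" using sets_Y[OF cl] by (auto simp: null_sets_def)
  show "{y \<in> space nu. \<not> y \<noteq> x} \<subseteq> {x} \<inter> Y" by (auto simp: space_nu)
qed

lemma sum_bound:
  assumes "ahl_at nu Y C vY x" "\<And>k. 0 \<le> w k" "\<And>k. 0 < r k"
    and "AE y in nu. g y \<le> (\<Sum>k. ennreal (w k) * indicator (ball x (r k)) y)"
  shows "(\<integral>\<^sup>+ y. g y \<partial>nu) \<le> (\<Sum>k. ennreal (w k * (C * r k powr vY)))"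
proof -
  have "(\<integral>\<^sup>+ y. g y \<partial>nu) \<le> (\<integral>\<^sup>+ y. (\<Sum>k. ennreal (w k) * indicator (ball x (r k)) y) \<partial>nu)"
    by (rule nn_integral_mono_AE) (rule assms(4))
  also have "\<dots> = (\<Sum>k. (\<integral>\<^sup>+ y. ennreal (w k) * indicator (ball x (r k)) y \<partial>nu))"
    by (rule nn_integral_suminf) (rule meas, measurable)
  also have "\<dots> = (\<Sum>k. ennreal (w k) * (\<integral>\<^sup>+ y. indicator (ball x (r k)) y \<partial>nu))"
    by (intro suminf_cong nn_integral_cmult) (rule meas, measurable)
  also have "\<dots> \<le> (\<Sum>k. ennreal (w k * (C * r k powr vY)))"
    by (intro suminf_le summableI)
       (use ball_int[OF assms(1) assms(3)] assms(2) in \<open>auto simp: ennreal_mult' intro!: mult_left_mono\<close>)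
  finally show ?thesis .
qed

lemma sum_bound_fin:
  assumes "ahl_at nu Y C vY x" "\<And>k. 0 \<le> w k" "\<And>k. 0 < r k"
  shows "(\<integral>\<^sup>+ y. (\<Sum>k<N. ennreal (w k) * indicator (ball x (r k)) y) \<partial>nu)
     \<le> (\<Sum>k<N. ennreal (w k * (C * r k powr vY)))"
proof -
  have "(\<integral>\<^sup>+ y. (\<Sum>k<N. ennreal (w k) * indicator (ball x (r k)) y) \<partial>nu)
     = (\<Sum>k<N. (\<integral>\<^sup>+ y. ennreal (w k) * indicator (ball x (r k)) y \<partial>nu))"
    by (rule nn_integral_sum) (rule meas, measurable)
  also have "\<dots> = (\<Sum>k<N. ennreal (w k) * (\<integral>\<^sup>+ y. indicator (ball x (r k)) y \<partial>nu))"
    by (intro sum.cong refl nn_integral_cmult) (rule meas, measurable)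
  also have "\<dots> \<le> (\<Sum>k<N. ennreal (w k * (C * r k powr vY)))"
    by (intro sum_mono)
       (use ball_int[OF assms(1) assms(3)] assms(2) in \<open>auto simp: ennreal_mult' intro!: mult_left_mono\<close>)
  finally show ?thesis .
qed


lemma term_le_suminf: "(f i :: ennreal) \<le> (\<Sum>k. f k)"
  using ennreal_suminf_lessD[of f "f i" i] by (metis not_le order_less_irrefl)

lemma geom_ennreal:
  assumes "0 \<le> c" "0 \<le> q" "q < (1::real)"
  shows "(\<Sum>k. ennreal (c * q^k)) = ennreal (c / (1 - q))"
proof (rule suminf_ennreal_eq)
  show "\<And>k. 0 \<le> c * q^k" using assms by simp
  have "(\<lambda>k. q^k) sums (1 / (1 - q))" using assms by (intro geometric_sums) simp
  from sums_mult[OF this, of c] show "(\<lambda>k. c * q^k) sums (c / (1 - q))" by simp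
qed

lemma ball_bound:
  assumes s: "0 \<le> s" "s < vY"
  shows "\<exists>K>0. \<forall>x R. ahl_at nu Y C vY x \<longrightarrow> 0 < R \<longrightarrow>
    (\<integral>\<^sup>+ y. inv_pow s (dist x y) * indicator (ball x R) y \<partial>nu) \<le> ennreal (K * R powr (vY - s))"
proof -
  define a where "a = vY - s"
  define q where "q = (1/2::real) powr a"
  have a: "0 < a" using s by (simp add: a_def)
  have q0: "0 < q" by (simp add: q_def)
  have q1: "q < 1" using powr_less_mono2[OF a, of "1/2" 1] by (simp add: q_def)
  define K where "K = C * 4 powr vY / (1 - q)"
  have K: "0 < K" using Cpos q1 by (simp add: K_def)
  show ?thesis
  proof (intro exI[of _ K] conjI allI impI K)
    fix x R assume hx: "ahl_at nu Y C vY x" and R: "0 < (R::real)"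
    define lo where "lo k = (R/2) * (1/2)^k" for k :: nat
    have lo: "0 < lo k" for k using R by (simp add: lo_def)
    have lo_eq: "lo k = R / 2^(Suc k)" for k by (simp add: lo_def power_one_over)
    have pw: "inv_pow s (dist x y) * indicator (ball x R) y
        \<le> (\<Sum>k. ennreal (lo k powr (- s)) * indicator (ball x (4 * lo k)) y)" if yx: "y \<noteq> x" for y
    proof (cases "y \<in> ball x R")
      case False thus ?thesis by simp
    next
      case True
      define t where "t = dist x y"
      have t: "0 < t" "t < R" using True yx by (auto simp: t_def)
      obtain k where k: "1 * 2^k \<le> R / t" "R / t \<le> 1 * 2^(Suc k)"
        using exists_dyadic[of 1 "R/t"] t by auto
      have "R \<le> t * 2^(Suc k)" using k(2) t by (simp add: field_simps)
      hence l1: "lo k \<le> t" unfolding lo_eq by (simp add: field_simps)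
      have "t * 2^k \<le> R" using k(1) t by (simp add: field_simps)
      hence "t \<le> 2 * lo k" unfolding lo_eq by (simp add: field_simps)
      hence l2: "y \<in> ball x (4 * lo k)" using lo[of k] by (simp add: t_def)
      have "inv_pow s (dist x y) * indicator (ball x R) y = inv_pow s t" using True by (simp add: t_def)
      also have "\<dots> \<le> ennreal (lo k powr (- s))" by (rule inv_pow_le[OF s(1) lo l1])
      also have "\<dots> = ennreal (lo k powr (- s)) * indicator (ball x (4 * lo k)) y" using l2 by simp
      also have "\<dots> \<le> (\<Sum>k. ennreal (lo k powr (- s)) * indicator (ball x (4 * lo k)) y)"
        by (rule term_le_suminf)
      finally show ?thesis .
    qed
    have "(\<integral>\<^sup>+ y. inv_pow s (dist x y) * indicator (ball x R) y \<partial>nu)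
        \<le> (\<Sum>k. ennreal (lo k powr (- s) * (C * (4 * lo k) powr vY)))"
      by (rule sum_bound[OF hx]) (use lo null_pt[OF hx] pw in \<open>auto elim!: eventually_mono\<close>)
    also have "\<dots> = (\<Sum>k. ennreal (C * 4 powr vY * (R/2) powr a * q^k))"
      unfolding lo_def q_def a_def using R by (subst powr_geom) auto
    also have "\<dots> = ennreal (C * 4 powr vY * (R/2) powr a / (1 - q))"
      by (rule geom_ennreal) (use Cpos q0 q1 in auto)
    also have "\<dots> \<le> ennreal (K * R powr (vY - s))"
    proof (rule ennreal_leI)
      have "(R/2) powr a \<le> R powr a" using R a by (intro powr_mono2) auto
      hence "C * 4 powr vY * (R/2) powr a / (1 - q) \<le> C * 4 powr vY * R powr a / (1 - q)"
        using Cpos q1 by (intro divide_right_mono mult_left_mono) auto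
      thus "C * 4 powr vY * (R/2) powr a / (1 - q) \<le> K * R powr (vY - s)"
        by (simp add: K_def a_def)
    qed
    finally show "(\<integral>\<^sup>+ y. inv_pow s (dist x y) * indicator (ball x R) y \<partial>nu) \<le> ennreal (K * R powr (vY - s))" .
  qed
qed

lemma out_bound:
  assumes s: "vY < s"
  shows "\<exists>K>0. \<forall>x \<rho>. ahl_at nu Y C vY x \<longrightarrow> 0 < \<rho> \<longrightarrow>
    (\<integral>\<^sup>+ y. inv_pow s (dist x y) * indicator (- ball x \<rho>) y \<partial>nu) \<le> ennreal (K * \<rho> powr (vY - s))"
proof -
  define a where "a = vY - s"
  define q where "q = (2::real) powr a"
  have a: "a < 0" using s by (simp add: a_def)
  have s0: "0 \<le> s" using s vpos by simp
  have q0: "0 < q" by (simp add: q_def)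
  have q1: "q < 1" using powr_less_one[OF _ a, of 2] by (simp add: q_def)
  define K where "K = C * 4 powr vY / (1 - q)"
  have K: "0 < K" using Cpos q1 by (simp add: K_def)
  show ?thesis
  proof (intro exI[of _ K] conjI allI impI K)
    fix x \<rho> assume hx: "ahl_at nu Y C vY x" and R: "0 < (\<rho>::real)"
    define lo where "lo k = \<rho> * 2^k" for k :: nat
    have lo: "0 < lo k" for k using R by (simp add: lo_def)
    have pw: "inv_pow s (dist x y) * indicator (- ball x \<rho>) y
        \<le> (\<Sum>k. ennreal (lo k powr (- s)) * indicator (ball x (4 * lo k)) y)" for y
    proof (cases "y \<in> ball x \<rho>")
      case True thus ?thesis by simp
    next
      case False
      define t where "t = dist x y"
      have t: "\<rho> \<le> t" using False by (auto simp: t_def)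
      obtain k where k: "\<rho> * 2^k \<le> t" "t \<le> \<rho> * 2^(Suc k)"
        using exists_dyadic[OF R t] by auto
      have l1: "lo k \<le> t" using k by (simp add: lo_def)
      have "t \<le> 2 * lo k" using k by (simp add: lo_def)
      hence l2: "y \<in> ball x (4 * lo k)" using lo[of k] by (simp add: t_def)
      have "inv_pow s (dist x y) * indicator (- ball x \<rho>) y = inv_pow s t" using False by (simp add: t_def)
      also have "\<dots> \<le> ennreal (lo k powr (- s))" by (rule inv_pow_le[OF s0 lo l1])
      also have "\<dots> = ennreal (lo k powr (- s)) * indicator (ball x (4 * lo k)) y" using l2 by simp
      also have "\<dots> \<le> (\<Sum>k. ennreal (lo k powr (- s)) * indicator (ball x (4 * lo k)) y)"
        by (rule term_le_suminf)
      finally show ?thesis .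
    qed
    have "(\<integral>\<^sup>+ y. inv_pow s (dist x y) * indicator (- ball x \<rho>) y \<partial>nu)
        \<le> (\<Sum>k. ennreal (lo k powr (- s) * (C * (4 * lo k) powr vY)))"
      by (rule sum_bound[OF hx]) (use lo pw in auto)
    also have "\<dots> = (\<Sum>k. ennreal (C * 4 powr vY * \<rho> powr a * q^k))"
      unfolding lo_def q_def a_def using R by (subst powr_geom) auto
    also have "\<dots> = ennreal (C * 4 powr vY * \<rho> powr a / (1 - q))"
      by (rule geom_ennreal) (use Cpos q0 q1 in auto)
    also have "\<dots> = ennreal (K * \<rho> powr (vY - s))"
      by (simp add: K_def a_def)
    finally show "(\<integral>\<^sup>+ y. inv_pow s (dist x y) * indicator (- ball x \<rho>) y \<partial>nu) \<le> ennreal (K * \<rho> powr (vY - s))" .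
  qed
qed

lemma tot_bound:
  assumes s: "0 \<le> s" "s < vY"
  shows "\<exists>K>0. \<forall>x. ahl_at nu Y C vY x \<longrightarrow>
    (\<integral>\<^sup>+ y. inv_pow s (dist x y) \<partial>nu) \<le> ennreal K"
proof -
  obtain K1 where K1: "K1 > 0" and hK1: "\<And>x R. ahl_at nu Y C vY x \<Longrightarrow> 0 < R \<Longrightarrow>
    (\<integral>\<^sup>+ y. inv_pow s (dist x y) * indicator (ball x R) y \<partial>nu) \<le> ennreal (K1 * R powr (vY - s))"
    using ball_bound[OF s] by blast
  show ?thesis
  proof (intro exI[of _ "K1 + V"] conjI allI impI)
    show "0 < K1 + V" using K1 V0 by simp
    fix x assume hx: "ahl_at nu Y C vY x"
    have pw: "inv_pow s (dist x y) \<le> inv_pow s (dist x y) * indicator (ball x 1) y + indicator (- ball x 1) y" for y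
    proof (cases "y \<in> ball x 1")
      case True thus ?thesis by simp
    next
      case False
      hence "inv_pow s (dist x y) \<le> ennreal (1 powr (- s))"
        by (intro inv_pow_le[OF s(1)]) (auto simp: not_less)
      thus ?thesis using False by simp
    qed
    have "(\<integral>\<^sup>+ y. inv_pow s (dist x y) \<partial>nu) \<le>
       (\<integral>\<^sup>+ y. inv_pow s (dist x y) * indicator (ball x 1) y + indicator (- ball x 1) y \<partial>nu)"
      by (rule nn_integral_mono) (rule pw)
    also have "\<dots> = (\<integral>\<^sup>+ y. inv_pow s (dist x y) * indicator (ball x 1) y \<partial>nu) + (\<integral>\<^sup>+ y. indicator (- ball x 1) y \<partial>nu)"
      by (rule nn_integral_add) (rule meas, measurable)+
    also have "\<dots> \<le> ennreal (K1 * 1 powr (vY - s)) + ennreal V"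
      by (intro add_mono hK1[OF hx] int_le_V) (auto simp: indicator_def)
    also have "\<dots> = ennreal (K1 + V)" using K1 V0 by (simp add: ennreal_plus)
    finally show "(\<integral>\<^sup>+ y. inv_pow s (dist x y) \<partial>nu) \<le> ennreal (K1 + V)" .
  qed
qed

lemma log_bound:
  shows "\<exists>K>0. \<forall>x \<rho>. ahl_at nu Y C vY x \<longrightarrow> 0 < \<rho> \<longrightarrow>
    (\<integral>\<^sup>+ y. inv_pow vY (dist x y) * indicator (- ball x \<rho>) y \<partial>nu) \<le> ennreal (K * (1 + \<bar>ln \<rho>\<bar>))"
proof -
  define c where "c = C * 4 powr vY"
  have c: "0 < c" using Cpos by (simp add: c_def)
  define K where "K = c * (1 / ln 2 + 1) + V"
  have K: "0 < K" using c V0 by (simp add: K_def add_pos_nonneg)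
  have s0: "0 \<le> vY" using vpos by simp
  show ?thesis
  proof (intro exI[of _ K] conjI allI impI K)
    fix x \<rho> assume hx: "ahl_at nu Y C vY x" and R: "0 < (\<rho>::real)"
    show "(\<integral>\<^sup>+ y. inv_pow vY (dist x y) * indicator (- ball x \<rho>) y \<partial>nu) \<le> ennreal (K * (1 + \<bar>ln \<rho>\<bar>))"
    proof (cases "1 \<le> \<rho>")
      case True
      have "(\<integral>\<^sup>+ y. inv_pow vY (dist x y) * indicator (- ball x \<rho>) y \<partial>nu) \<le> ennreal V"
      proof (rule int_le_V)
        fix y show "inv_pow vY (dist x y) * indicator (- ball x \<rho>) y \<le> 1"
        proof (cases "y \<in> ball x \<rho>")
          case False
          hence "inv_pow vY (dist x y) \<le> ennreal (1 powr (- vY))"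
            using True by (intro inv_pow_le[OF s0]) (auto simp: not_less)
          thus ?thesis using False by simp
        qed simp
      qed
      also have "\<dots> \<le> ennreal (K * (1 + \<bar>ln \<rho>\<bar>))"
      proof (rule ennreal_leI)
        have "V \<le> K" using c by (simp add: K_def)
        also have "K \<le> K * (1 + \<bar>ln \<rho>\<bar>)" using K by simp
        finally show "V \<le> K * (1 + \<bar>ln \<rho>\<bar>)" .
      qed
      finally show ?thesis .
    next
      case False
      hence R1: "\<rho> < 1" by simp
      define l where "l = log 2 (1 / \<rho>)"
      have l0: "0 < l" using R R1 by (simp add: l_def)
      have l_eq: "l = \<bar>ln \<rho>\<bar> / ln 2" using R R1 by (simp add: l_def log_def ln_div)
      define N where "N = nat \<lceil>l\<rceil>"
      have N1: "real N \<le> l + 1" using l0 by (simp add: N_def)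
      have N2: "1 / \<rho> \<le> 2 ^ N"
      proof -
        have "1 / \<rho> = 2 powr l" using R by (simp add: l_def)
        also have "\<dots> \<le> 2 powr (real N)" using l0 by (intro powr_mono) (auto simp: N_def)
        also have "\<dots> = 2 ^ N" by (simp add: powr_realpow)
        finally show ?thesis .
      qed
      define lo where "lo k = \<rho> * 2^k" for k :: nat
      have lo: "0 < lo k" for k using R by (simp add: lo_def)
      define F where "F y = (\<Sum>k<N. ennreal (lo k powr (- vY)) * indicator (ball x (4 * lo k)) y)" for y
      have pw: "inv_pow vY (dist x y) * indicator (- ball x \<rho>) y \<le> F y + indicator (- ball x 1) y" for y
      proof (cases "y \<in> ball x \<rho>")
        case True thus ?thesis by simp
      next
        case nb: False
        define t where "t = dist x y"
        have t: "\<rho> \<le> t" using nb by (auto simp: t_def)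
        show ?thesis
        proof (cases "1 \<le> t")
          case True
          hence "inv_pow vY (dist x y) \<le> ennreal (1 powr (- vY))"
            by (intro inv_pow_le[OF s0]) (auto simp: t_def)
          moreover have "y \<notin> ball x 1" using True by (simp add: t_def)
          ultimately show ?thesis using nb by (simp add: add_increasing)
        next
          case t1: False
          obtain k where k: "\<rho> * 2^k \<le> t" "t \<le> \<rho> * 2^(Suc k)"
            using exists_dyadic[OF R t] by auto
          have "1 \<le> \<rho> * 2^N" using N2 R by (simp add: field_simps)
          hence "\<rho> * 2^k < \<rho> * 2^N" using k(1) t1 by linarith
          hence kN: "k < N" using R by simp
          have l1: "lo k \<le> t" using k by (simp add: lo_def)
          have "t \<le> 2 * lo k" using k by (simp add: lo_def)
          hence l2: "y \<in> ball x (4 * lo k)" using lo[of k] by (simp add: t_def)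
          have "inv_pow vY (dist x y) * indicator (- ball x \<rho>) y = inv_pow vY t" using nb by (simp add: t_def)
          also have "\<dots> \<le> ennreal (lo k powr (- vY))" by (rule inv_pow_le[OF s0 lo l1])
          also have "\<dots> = ennreal (lo k powr (- vY)) * indicator (ball x (4 * lo k)) y" using l2 by simp
          also have "\<dots> \<le> F y" unfolding F_def
            by (rule member_le_sum[where f="\<lambda>k. ennreal (lo k powr (- vY)) * indicator (ball x (4 * lo k)) y"]) (use kN in auto)
          also have "\<dots> \<le> F y + indicator (- ball x 1) y" by simp
          finally show ?thesis .
        qed
      qed
      have "(\<integral>\<^sup>+ y. inv_pow vY (dist x y) * indicator (- ball x \<rho>) y \<partial>nu)
          \<le> (\<integral>\<^sup>+ y. F y + indicator (- ball x 1) y \<partial>nu)"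
        by (rule nn_integral_mono) (rule pw)
      also have "\<dots> = (\<integral>\<^sup>+ y. F y \<partial>nu) + (\<integral>\<^sup>+ y. indicator (- ball x 1) y \<partial>nu)"
      proof (rule nn_integral_add)
        show "F \<in> borel_measurable nu" unfolding F_def
          by (intro borel_measurable_sum) (rule meas, measurable)
        show "indicator (- ball x 1) \<in> borel_measurable nu" by (rule meas) measurable
      qed
      also have "\<dots> \<le> (\<Sum>k<N. ennreal (lo k powr (- vY) * (C * (4 * lo k) powr vY))) + ennreal V"
        unfolding F_def
        by (intro add_mono sum_bound_fin[OF hx] int_le_V) (auto simp: lo indicator_def)
      also have "(\<Sum>k<N. ennreal (lo k powr (- vY) * (C * (4 * lo k) powr vY))) = (\<Sum>k<N. ennreal c)"
        unfolding lo_def c_def using R by (intro sum.cong refl) (subst powr_geom, auto)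
      also have "\<dots> = ennreal (real N * c)" using c by (simp add: ennreal_of_nat_eq_real_of_nat ennreal_mult)
      also have "ennreal (real N * c) + ennreal V = ennreal (real N * c + V)"
        using c V0 by (simp add: ennreal_plus)
      also have "\<dots> \<le> ennreal (K * (1 + \<bar>ln \<rho>\<bar>))"
      proof (rule ennreal_leI)
        define L where "L = \<bar>ln \<rho>\<bar>"
        have L0: "0 \<le> L" by (simp add: L_def)
        have ln2: "0 < ln (2::real)" by simp
        have "real N * c \<le> (L / ln 2 + 1) * c" using N1 c l_eq by (simp add: L_def)
        also have "\<dots> \<le> c * (1 / ln 2 + 1) * (1 + L)"
        proof -
          have "L / ln 2 + 1 \<le> (1 / ln 2 + 1) * (1 + L)"
            using L0 ln2 by (simp add: field_simps)
          thus ?thesis using c by (simp add: mult.commute mult_left_mono)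
        qed
        finally have "real N * c \<le> c * (1 / ln 2 + 1) * (1 + L)" .
        moreover have "V * 1 \<le> V * (1 + L)" using V0 L0 by (intro mult_left_mono) auto
        ultimately show "real N * c + V \<le> K * (1 + \<bar>ln \<rho>\<bar>)"
          by (simp add: K_def L_def distrib_right)
      qed
      finally show ?thesis by simp
    qed
  qed
qed

lemma four_le:
  fixes a b c d :: ennreal
  shows "a \<le> a + b + c + d" "b \<le> a + b + c + d" "c \<le> a + b + c + d" "d \<le> a + b + c + d"
  by (simp_all add: add_increasing add_increasing2)

lemma split_bound:
  assumes s: "0 \<le> s1" "0 \<le> s2" and xz: "x \<noteq> z"
  defines "h \<equiv> dist x z / 2"
  shows "(\<integral>\<^sup>+ y. inv_pow s1 (dist x y) * inv_pow s2 (dist y z) \<partial>nu) \<le>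
     ennreal (h powr (- s2)) * (\<integral>\<^sup>+ y. inv_pow s1 (dist x y) * indicator (ball x h) y \<partial>nu)
   + ennreal (h powr (- s1)) * (\<integral>\<^sup>+ y. inv_pow s2 (dist z y) * indicator (ball z h) y \<partial>nu)
   + (\<integral>\<^sup>+ y. inv_pow (s1 + s2) (dist x y) * indicator (- ball x h) y \<partial>nu)
   + (\<integral>\<^sup>+ y. inv_pow (s1 + s2) (dist z y) * indicator (- ball z h) y \<partial>nu)"
proof -
  have h: "0 < h" using xz by (simp add: h_def)
  define f1 where "f1 y = ennreal (h powr (- s2)) * (inv_pow s1 (dist x y) * indicator (ball x h) y)" for y
  define f2 where "f2 y = ennreal (h powr (- s1)) * (inv_pow s2 (dist z y) * indicator (ball z h) y)" for y
  define f3 where "f3 y = inv_pow (s1 + s2) (dist x y) * indicator (- ball x h) y" for y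
  define f4 where "f4 y = inv_pow (s1 + s2) (dist z y) * indicator (- ball z h) y" for y
  have m1: "f1 \<in> borel_measurable nu" unfolding f1_def by (rule meas) measurable
  have m2: "f2 \<in> borel_measurable nu" unfolding f2_def by (rule meas) measurable
  have m3: "f3 \<in> borel_measurable nu" unfolding f3_def by (rule meas) measurable
  have m4: "f4 \<in> borel_measurable nu" unfolding f4_def by (rule meas) measurable
  have pw: "inv_pow s1 (dist x y) * inv_pow s2 (dist y z) \<le> f1 y + f2 y + f3 y + f4 y" for y
  proof -
    define a where "a = dist x y"
    define b where "b = dist z y"
    have yz: "dist y z = b" by (simp add: b_def dist_commute)
    have tri: "2 * h \<le> a + b" unfolding a_def b_def h_def using dist_triangle[of x z y] by (simp add: dist_commute)
    have a0: "0 \<le> a" "0 \<le> b" by (simp_all add: a_def b_def)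
    show ?thesis
    proof (cases "a < h")
      case True
      hence "h \<le> b" using tri by simp
      hence "inv_pow s2 b \<le> ennreal (h powr (- s2))" by (rule inv_pow_le[OF s(2) h])
      hence "inv_pow s1 a * inv_pow s2 b \<le> inv_pow s1 a * ennreal (h powr (- s2))"
        by (rule mult_left_mono) simp
      also have "\<dots> = f1 y" using True by (simp add: f1_def a_def mult.commute)
      finally have L: "inv_pow s1 a * inv_pow s2 b \<le> f1 y" .
          from order_trans[OF L four_le(1)[where a="f1 y" and b="f2 y" and c="f3 y" and d="f4 y"]] show ?thesis by (simp add: a_def yz)
    next
      case na: False
      show ?thesis
      proof (cases "b < h")
        case True
        hence "h \<le> a" using tri by simp
        hence "inv_pow s1 a \<le> ennreal (h powr (- s1))" by (rule inv_pow_le[OF s(1) h])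
        hence "inv_pow s1 a * inv_pow s2 b \<le> ennreal (h powr (- s1)) * inv_pow s2 b"
          by (rule mult_right_mono) simp
        also have "\<dots> = f2 y" using True by (simp add: f2_def b_def)
        finally have L: "inv_pow s1 a * inv_pow s2 b \<le> f2 y" .
          from order_trans[OF L four_le(2)[where a="f1 y" and b="f2 y" and c="f3 y" and d="f4 y"]] show ?thesis by (simp add: a_def yz)
      next
        case nb: False
        have ha: "h \<le> a" "h \<le> b" using na nb by simp_all
        show ?thesis
        proof (cases "a \<le> b")
          case True
          have "inv_pow s2 b \<le> inv_pow s2 a" using h ha True by (intro inv_pow_anti[OF s(2)]) auto
          hence "inv_pow s1 a * inv_pow s2 b \<le> inv_pow s1 a * inv_pow s2 a"
            by (rule mult_left_mono) simp
          also have "\<dots> = inv_pow (s1 + s2) a" using s a0 by (simp add: inv_pow_mult)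
          also have "\<dots> = f3 y" using na by (simp add: f3_def a_def)
          finally have L: "inv_pow s1 a * inv_pow s2 b \<le> f3 y" .
          from order_trans[OF L four_le(3)[where a="f1 y" and b="f2 y" and c="f3 y" and d="f4 y"]] show ?thesis by (simp add: a_def yz)
        next
          case False
          have "inv_pow s1 a \<le> inv_pow s1 b" using h ha False by (intro inv_pow_anti[OF s(1)]) auto
          hence "inv_pow s1 a * inv_pow s2 b \<le> inv_pow s1 b * inv_pow s2 b"
            by (rule mult_right_mono) simp
          also have "\<dots> = inv_pow (s1 + s2) b" using s a0 by (simp add: inv_pow_mult)
          also have "\<dots> = f4 y" using nb by (simp add: f4_def b_def)
          finally have L: "inv_pow s1 a * inv_pow s2 b \<le> f4 y" .
          from order_trans[OF L four_le(4)[where a="f1 y" and b="f2 y" and c="f3 y" and d="f4 y"]] show ?thesis by (simp add: a_def yz)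
        qed
      qed
    qed
  qed
  have "(\<integral>\<^sup>+ y. inv_pow s1 (dist x y) * inv_pow s2 (dist y z) \<partial>nu) \<le> (\<integral>\<^sup>+ y. f1 y + f2 y + f3 y + f4 y \<partial>nu)"
    by (rule nn_integral_mono) (rule pw)
  also have "\<dots> = (\<integral>\<^sup>+ y. f1 y + f2 y + f3 y \<partial>nu) + (\<integral>\<^sup>+ y. f4 y \<partial>nu)"
    by (rule nn_integral_add) (use m1 m2 m3 m4 in auto)
  also have "(\<integral>\<^sup>+ y. f1 y + f2 y + f3 y \<partial>nu) = (\<integral>\<^sup>+ y. f1 y + f2 y \<partial>nu) + (\<integral>\<^sup>+ y. f3 y \<partial>nu)"
    by (rule nn_integral_add) (use m1 m2 m3 in auto)
  also have "(\<integral>\<^sup>+ y. f1 y + f2 y \<partial>nu) = (\<integral>\<^sup>+ y. f1 y \<partial>nu) + (\<integral>\<^sup>+ y. f2 y \<partial>nu)"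
    by (rule nn_integral_add) (use m1 m2 in auto)
  also have "(\<integral>\<^sup>+ y. f1 y \<partial>nu) = ennreal (h powr (- s2)) * (\<integral>\<^sup>+ y. inv_pow s1 (dist x y) * indicator (ball x h) y \<partial>nu)"
    unfolding f1_def by (rule nn_integral_cmult) (rule meas, measurable)
  also have "(\<integral>\<^sup>+ y. f2 y \<partial>nu) = ennreal (h powr (- s1)) * (\<integral>\<^sup>+ y. inv_pow s2 (dist z y) * indicator (ball z h) y \<partial>nu)"
    unfolding f2_def by (rule nn_integral_cmult) (rule meas, measurable)
  finally show ?thesis by (simp add: f3_def f4_def)
qed
end


theorem proposition4p1:
  fixes X Y Z :: "'a::metric_space set"
    and nu :: "'a measure"
    and vY s1 s2 :: real
  assumes space_nu: "space nu = Y"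
    and borel_sets: "sets (restrict_space borel Y) \<subseteq> sets nu"
    and finite_nu: "emeasure nu Y < \<infinity>"
    and vY_pos: "0 < vY"
    and ahlfors: "upper_ahlfors_regular nu Y vY (X \<union> Z)"
    and s1: "0 \<le> s1" "s1 < vY"
    and s2: "0 \<le> s2" "s2 < vY"
    and strong: "s1 + s2 = vY \<Longrightarrow> strongly_upper_ahlfors_regular nu Y vY (X \<union> Z)"
  shows "\<exists>c::real. c > 0 \<and> (\<forall>x\<in>X. \<forall>z\<in>Z.
     (s1 + s2 < vY \<longrightarrow>
        (\<integral>\<^sup>+ y. inv_pow s1 (dist x y) * inv_pow s2 (dist y z) \<partial>nu)
          \<le> ennreal (c * (1 + dist x z powr (vY - (s1 + s2))))) \<and>
     (x \<noteq> z \<and> s1 + s2 = vY \<longrightarrow>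
        (\<integral>\<^sup>+ y. inv_pow s1 (dist x y) * inv_pow s2 (dist y z) \<partial>nu)
          \<le> ennreal (c * (1 + \<bar>ln (dist x z)\<bar>))) \<and>
     (x \<noteq> z \<and> s1 + s2 > vY \<longrightarrow>
        (\<integral>\<^sup>+ y. inv_pow s1 (dist x y) * inv_pow s2 (dist y z) \<partial>nu)
          \<le> ennreal (c * dist x z powr (vY - (s1 + s2)))))"
proof -
  obtain r0 c0 where r0: "r0 > 0" and c0: "c0 > 0" and hA: "\<And>x r. x \<in> X \<union> Z \<Longrightarrow> 0 < r \<Longrightarrow> ereal r < r0 \<Longrightarrow>
      emeasure nu (ball x r \<inter> Y) \<le> ennreal (c0 * r powr vY)"
    using ahlfors unfolding upper_ahlfors_regular_def by blast
  obtain \<rho>0 where \<rho>0: "0 < ereal \<rho>0" "ereal \<rho>0 < r0" using ereal_dense2[OF r0] by blast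
  have p0: "0 < \<rho>0" using \<rho>0 by simp
  define V where "V = enn2real (emeasure nu Y)"
  have VY: "emeasure nu Y = ennreal V" using finite_nu by (simp add: V_def ennreal_enn2real less_top)
  have V0: "0 \<le> V" by (simp add: V_def)
  define C where "C = c0 + V / \<rho>0 powr vY"
  have Cpos: "0 < C" using c0 V0 p0 by (simp add: C_def add_pos_nonneg)
  interpret sett nu Y C vY V
    by unfold_locales (use space_nu borel_sets VY V0 Cpos vY_pos in auto)
  have ahl: "ahl_at nu Y C vY x" if x: "x \<in> X \<union> Z" for x
    unfolding ahl_at_def
  proof (intro allI impI)
    fix r :: real assume r: "0 < r"
    have extra: "0 \<le> V / \<rho>0 powr vY * r powr vY" using V0 by simp
    show "emeasure nu (ball x r \<inter> Y) \<le> ennreal (C * r powr vY)"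
    proof (cases "r < \<rho>0")
      case True
      hence "ereal r < ereal \<rho>0" by simp
      hence "ereal r < r0" using \<rho>0(2) by (rule less_trans)
      hence "emeasure nu (ball x r \<inter> Y) \<le> ennreal (c0 * r powr vY)" using hA[OF x r] by blast
      also have "\<dots> \<le> ennreal (C * r powr vY)" using extra by (intro ennreal_leI) (simp add: C_def distrib_right)
      finally show ?thesis .
    next
      case False
      have "emeasure nu (ball x r \<inter> Y) \<le> emeasure nu (space nu)" by (rule emeasure_space)
      also have "\<dots> = ennreal V" using VY space_nu by simp
      also have "\<dots> \<le> ennreal (C * r powr vY)"
      proof (rule ennreal_leI)
        have "\<rho>0 powr vY \<le> r powr vY" using False p0 vY_pos by (intro powr_mono2) auto
        hence "V \<le> V / \<rho>0 powr vY * r powr vY" using V0 p0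
          by (simp add: field_simps mult_left_mono)
        also have "\<dots> \<le> C * r powr vY" using c0 r by (simp add: C_def distrib_right)
        finally show "V \<le> C * r powr vY" .
      qed
      finally show ?thesis .
    qed
  qed
  obtain K1 where K1: "K1 > 0" and hK1: "\<And>x R. ahl_at nu Y C vY x \<Longrightarrow> 0 < R \<Longrightarrow>
    (\<integral>\<^sup>+ y. inv_pow s1 (dist x y) * indicator (ball x R) y \<partial>nu) \<le> ennreal (K1 * R powr (vY - s1))"
    using ball_bound[OF s1] by blast
  obtain K2 where K2: "K2 > 0" and hK2: "\<And>x R. ahl_at nu Y C vY x \<Longrightarrow> 0 < R \<Longrightarrow>
    (\<integral>\<^sup>+ y. inv_pow s2 (dist x y) * indicator (ball x R) y \<partial>nu) \<le> ennreal (K2 * R powr (vY - s2))"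
    using ball_bound[OF s2] by blast
  define s where "s = s1 + s2"
  have s0: "0 \<le> s" using s1 s2 by (simp add: s_def)
  have main: "(\<integral>\<^sup>+ y. inv_pow s1 (dist x y) * inv_pow s2 (dist y z) \<partial>nu) \<le>
     ennreal ((K1 + K2) * (dist x z / 2) powr (vY - s))
   + (\<integral>\<^sup>+ y. inv_pow s (dist x y) * indicator (- ball x (dist x z / 2)) y \<partial>nu)
   + (\<integral>\<^sup>+ y. inv_pow s (dist z y) * indicator (- ball z (dist x z / 2)) y \<partial>nu)"
    if x: "x \<in> X" and z: "z \<in> Z" and xz: "x \<noteq> z" for x z
  proof -
    define h where "h = dist x z / 2"
    have h: "0 < h" using xz by (simp add: h_def)
    have hx: "ahl_at nu Y C vY x" and hz: "ahl_at nu Y C vY z" using ahl x z by auto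
    have e1: "ennreal (h powr (- s2)) * (\<integral>\<^sup>+ y. inv_pow s1 (dist x y) * indicator (ball x h) y \<partial>nu)
        \<le> ennreal (K1 * h powr (vY - s))"
    proof -
      have "ennreal (h powr (- s2)) * (\<integral>\<^sup>+ y. inv_pow s1 (dist x y) * indicator (ball x h) y \<partial>nu)
          \<le> ennreal (h powr (- s2)) * ennreal (K1 * h powr (vY - s1))"
        by (rule mult_left_mono[OF hK1[OF hx h]]) simp
      also have "\<dots> = ennreal (h powr (- s2) * (K1 * h powr (vY - s1)))"
        using K1 by (simp add: ennreal_mult)
      also have "h powr (- s2) * (K1 * h powr (vY - s1)) = K1 * h powr (vY - s)"
        by (simp add: s_def powr_add[symmetric] algebra_simps)
      finally show ?thesis .
    qed
    have e2: "ennreal (h powr (- s1)) * (\<integral>\<^sup>+ y. inv_pow s2 (dist z y) * indicator (ball z h) y \<partial>nu)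
        \<le> ennreal (K2 * h powr (vY - s))"
    proof -
      have "ennreal (h powr (- s1)) * (\<integral>\<^sup>+ y. inv_pow s2 (dist z y) * indicator (ball z h) y \<partial>nu)
          \<le> ennreal (h powr (- s1)) * ennreal (K2 * h powr (vY - s2))"
        by (rule mult_left_mono[OF hK2[OF hz h]]) simp
      also have "\<dots> = ennreal (h powr (- s1) * (K2 * h powr (vY - s2)))"
        using K2 by (simp add: ennreal_mult)
      also have "h powr (- s1) * (K2 * h powr (vY - s2)) = K2 * h powr (vY - s)"
        by (simp add: s_def powr_add[symmetric] algebra_simps)
      finally show ?thesis .
    qed
    have eq: "ennreal (K1 * h powr (vY - s)) + ennreal (K2 * h powr (vY - s)) = ennreal ((K1 + K2) * h powr (vY - s))"
      using K1 K2 h by (simp add: ennreal_plus[symmetric] distrib_right del: ennreal_plus)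
    note sb = split_bound[OF s1(1) s2(1) xz, folded h_def s_def]
    have "(\<integral>\<^sup>+ y. inv_pow s1 (dist x y) * inv_pow s2 (dist y z) \<partial>nu) \<le>
        ennreal (K1 * h powr (vY - s)) + ennreal (K2 * h powr (vY - s))
      + (\<integral>\<^sup>+ y. inv_pow s (dist x y) * indicator (- ball x h) y \<partial>nu)
      + (\<integral>\<^sup>+ y. inv_pow s (dist z y) * indicator (- ball z h) y \<partial>nu)"
      by (rule order_trans[OF sb]) (intro add_mono e1 e2 order_refl)
    from this[unfolded add.assoc[symmetric] eq] show ?thesis by (simp only: h_def)
  qed
  have d0: "0 < dist x z" if "x \<noteq> z" for x z :: 'a using that by simp
  consider (lt) "s < vY" | (eq) "s = vY" | (gt) "vY < s" by linarith
  then show ?thesis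
  proof cases
    case lt
    obtain KT where KT: "KT > 0" and hKT: "\<And>x. ahl_at nu Y C vY x \<Longrightarrow>
        (\<integral>\<^sup>+ y. inv_pow s (dist x y) \<partial>nu) \<le> ennreal KT"
      using tot_bound[OF s0 lt] by blast
    have out_le: "(\<integral>\<^sup>+ y. inv_pow s (dist x y) * indicator (- ball x \<rho>) y \<partial>nu) \<le> ennreal KT"
      if "ahl_at nu Y C vY x" for x \<rho>
    proof -
      have "(\<integral>\<^sup>+ y. inv_pow s (dist x y) * indicator (- ball x \<rho>) y \<partial>nu) \<le> (\<integral>\<^sup>+ y. inv_pow s (dist x y) \<partial>nu)"
        by (rule nn_integral_mono) (simp add: indicator_def)
      also have "\<dots> \<le> ennreal KT" by (rule hKT[OF that])
      finally show ?thesis .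
    qed
    define c where "c = K1 + K2 + 2 * KT"
    have c: "0 < c" using K1 K2 KT by (simp add: c_def)
    have A: "(\<integral>\<^sup>+ y. inv_pow s1 (dist x y) * inv_pow s2 (dist y z) \<partial>nu)
          \<le> ennreal (c * (1 + dist x z powr (vY - (s1 + s2))))" if x: "x \<in> X" and z: "z \<in> Z" for x z
    proof (cases "x = z")
      case True
      have "(\<integral>\<^sup>+ y. inv_pow s1 (dist x y) * inv_pow s2 (dist y z) \<partial>nu) = (\<integral>\<^sup>+ y. inv_pow s (dist x y) \<partial>nu)"
        using True s1 s2 by (intro nn_integral_cong) (simp add: dist_commute inv_pow_mult s_def)
      also have "\<dots> \<le> ennreal KT" using hKT ahl x by blast
      also have "\<dots> \<le> ennreal (c * (1 + dist x z powr (vY - (s1 + s2))))"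
        using True KT K1 K2 by (intro ennreal_leI) (simp add: c_def)
      finally show ?thesis .
    next
      case False
      define d where "d = dist x z"
      have d: "0 < d" using False by (simp add: d_def)
      have a: "0 < vY - s" using lt by simp
      have "(\<integral>\<^sup>+ y. inv_pow s1 (dist x y) * inv_pow s2 (dist y z) \<partial>nu)
          \<le> ennreal ((K1 + K2) * (d / 2) powr (vY - s)) + ennreal KT + ennreal KT"
        using main[OF x z False] out_le[of x "d/2"] out_le[of z "d/2"] ahl x z unfolding d_def
        by (meson UnI1 UnI2 add_mono order_refl order_trans)
      also have "\<dots> = ennreal ((K1 + K2) * (d / 2) powr (vY - s) + KT + KT)"
        using K1 K2 KT by (simp add: ennreal_plus[symmetric] del: ennreal_plus)
      also have "\<dots> \<le> ennreal (c * (1 + dist x z powr (vY - (s1 + s2))))"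
      proof (rule ennreal_leI)
        have "(d / 2) powr (vY - s) \<le> d powr (vY - s)" using d a by (intro powr_mono2) auto
        hence "(K1 + K2) * (d / 2) powr (vY - s) \<le> (K1 + K2) * d powr (vY - s)"
          using K1 K2 by (intro mult_left_mono) auto
        moreover have "0 \<le> 2 * KT * d powr (vY - s)" using KT by simp
        ultimately show "(K1 + K2) * (d / 2) powr (vY - s) + KT + KT \<le> c * (1 + dist x z powr (vY - (s1 + s2)))"
          using K1 K2 unfolding c_def d_def[symmetric] s_def[symmetric] by (simp add: algebra_simps)
      qed
      finally show ?thesis .
    qed
    have n2: "\<not> s1 + s2 = vY" "\<not> s1 + s2 > vY" using lt by (simp_all add: s_def)
    show ?thesis using c A n2 by blast
  next
    case eq
    obtain KL where KL: "KL > 0" and hKL: "\<And>x \<rho>. ahl_at nu Y C vY x \<Longrightarrow> 0 < \<rho> \<Longrightarrow>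
      (\<integral>\<^sup>+ y. inv_pow vY (dist x y) * indicator (- ball x \<rho>) y \<partial>nu) \<le> ennreal (KL * (1 + \<bar>ln \<rho>\<bar>))"
      using log_bound by blast
    define c where "c = K1 + K2 + 4 * KL"
    have c: "0 < c" using K1 K2 KL by (simp add: c_def)
    have A: "(\<integral>\<^sup>+ y. inv_pow s1 (dist x y) * inv_pow s2 (dist y z) \<partial>nu)
          \<le> ennreal (c * (1 + \<bar>ln (dist x z)\<bar>))" if x: "x \<in> X" and z: "z \<in> Z" and xz: "x \<noteq> z" for x z
    proof -
      define d where "d = dist x z"
      have d: "0 < d" using xz by (simp add: d_def)
      have h: "0 < d / 2" using d by simp
      define L where "L = \<bar>ln (d / 2)\<bar>"
      have "(\<integral>\<^sup>+ y. inv_pow s1 (dist x y) * inv_pow s2 (dist y z) \<partial>nu)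
          \<le> ennreal ((K1 + K2) * (d / 2) powr (vY - s)) + ennreal (KL * (1 + L)) + ennreal (KL * (1 + L))"
        using main[OF x z xz] hKL[OF _ h, of x] hKL[OF _ h, of z] ahl x z eq unfolding d_def L_def
        by (meson UnI1 UnI2 add_mono order_refl order_trans)
      also have "\<dots> = ennreal ((K1 + K2) + KL * (1 + L) + KL * (1 + L))"
        using K1 K2 KL eq d by (simp add: ennreal_plus[symmetric] L_def del: ennreal_plus)
      also have "\<dots> \<le> ennreal (c * (1 + \<bar>ln (dist x z)\<bar>))"
      proof (rule ennreal_leI)
        define M where "M = \<bar>ln d\<bar>"
        have e: "ln (d / 2) = ln d - ln 2" using d by (simp add: ln_div)
        have l2: "\<bar>ln (2::real)\<bar> = ln 2" by simp
        have "L \<le> M + ln 2" unfolding L_def M_def e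
          using abs_triangle_ineq4[of "ln d" "ln 2"] l2 by linarith
        hence LM: "L \<le> M + 1" using ln_2_less_1 by simp
        have M0: "0 \<le> M" by (simp add: M_def)
        have "KL * (1 + L) \<le> KL * (2 + M)" using LM KL by (intro mult_left_mono) auto
        moreover have "K1 + K2 \<le> (K1 + K2) * (1 + M)" using K1 K2 M0 by (simp add: algebra_simps)
        moreover have "2 * KL * (2 + M) \<le> 4 * KL * (1 + M)" using KL M0 by (simp add: algebra_simps)
        ultimately show "(K1 + K2) + KL * (1 + L) + KL * (1 + L) \<le> c * (1 + \<bar>ln (dist x z)\<bar>)"
          unfolding c_def M_def d_def by (simp add: algebra_simps)
      qed
      finally show ?thesis .
    qed
    have n2: "\<not> s1 + s2 < vY" "\<not> s1 + s2 > vY" using eq by (simp_all add: s_def)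
    show ?thesis using c A n2 by blast
  next
    case gt
    obtain KO where KO: "KO > 0" and hKO: "\<And>x \<rho>. ahl_at nu Y C vY x \<Longrightarrow> 0 < \<rho> \<Longrightarrow>
      (\<integral>\<^sup>+ y. inv_pow s (dist x y) * indicator (- ball x \<rho>) y \<partial>nu) \<le> ennreal (KO * \<rho> powr (vY - s))"
      using out_bound[OF gt] by blast
    define c where "c = (K1 + K2 + 2 * KO) * 2 powr (s - vY)"
    have c: "0 < c" using K1 K2 KO by (simp add: c_def)
    have A: "(\<integral>\<^sup>+ y. inv_pow s1 (dist x y) * inv_pow s2 (dist y z) \<partial>nu)
          \<le> ennreal (c * dist x z powr (vY - (s1 + s2)))" if x: "x \<in> X" and z: "z \<in> Z" and xz: "x \<noteq> z" for x z
    proof -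
      define d where "d = dist x z"
      have d: "0 < d" using xz by (simp add: d_def)
      have h: "0 < d / 2" using d by simp
      have "(\<integral>\<^sup>+ y. inv_pow s1 (dist x y) * inv_pow s2 (dist y z) \<partial>nu)
          \<le> ennreal ((K1 + K2) * (d / 2) powr (vY - s)) + ennreal (KO * (d / 2) powr (vY - s)) + ennreal (KO * (d / 2) powr (vY - s))"
        using main[OF x z xz] hKO[OF _ h, of x] hKO[OF _ h, of z] ahl x z unfolding d_def
        by (meson UnI1 UnI2 add_mono order_refl order_trans)
      also have "\<dots> = ennreal ((K1 + K2) * (d / 2) powr (vY - s) + KO * (d / 2) powr (vY - s) + KO * (d / 2) powr (vY - s))"
        using K1 K2 KO by (simp add: ennreal_plus[symmetric] del: ennreal_plus)
      also have "\<dots> = ennreal ((K1 + K2 + 2 * KO) * (d / 2) powr (vY - s))"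
        by (rule arg_cong[where f=ennreal]) (simp add: algebra_simps)
      also have "(d / 2) powr (vY - s) = d powr (vY - s) * 2 powr (s - vY)"
      proof -
        have "(d / 2) powr (vY - s) = d powr (vY - s) / 2 powr (vY - s)" using d by (simp add: powr_divide)
        also have "\<dots> = d powr (vY - s) * 2 powr (- (vY - s))" by (subst powr_minus) (simp add: divide_inverse)
        finally show ?thesis by simp
      qed
      also have "(K1 + K2 + 2 * KO) * (d powr (vY - s) * 2 powr (s - vY)) = c * dist x z powr (vY - (s1 + s2))"
        by (simp add: c_def d_def s_def)
      finally show ?thesis .
    qed
    have n2: "\<not> s1 + s2 < vY" "\<not> s1 + s2 = vY" using gt by (simp_all add: s_def)
    show ?thesis using c A n2 by blast
  qed
qed

end
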